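(* Let $\mathcal{R}$ be a cell space, let $A,A'\subseteq M$ and let $\mathfrak{g},\mathfrak{g}'\in G/G_0$. Then for every $m\in(\cdot\triangleleft\mathfrak{g})^{-1}(A)\setminus(\cdot\triangleleft\mathfrak{g}')^{-1}(A')$ we have $m\triangleleft\mathfrak{g}\in\bigcup_{g\in\mathfrak{g}}\big(A\setminus(\cdot\triangleleft g^{-1}\cdot\mathfrak{g}')^{-1}(A')\big)$ and $m\triangleleft\mathfrak{g}'\in\bigcup_{g'\in\mathfrak{g}'}\big((\cdot\triangleleft(g')^{-1}\cdot\mathfrak{g})^{-1}(A)\setminus A'\big)$.
   Context: A cell space $\mathcal{R}$ consists of a group $G$ acting transitively on the left on a nonempty set $M$ via $\triangleright$, a point $m_0\in M$ and a family $(g_{m_0,m})_{m\in M}$ in $G$ with $g_{m_0,m}\triangleright m_0=m$. $G_0$ is the stabiliser of $m_0$, $G/G_0$ the set of left cosets (elements are subsets of $G$), with $G$ acting by $g\cdot hG_0=ghG_0$. The right semi-action $\triangleleft\colon M\times G/G_0\to M$ is $m\triangleleft gG_0=g_{m_0,m}g\triangleright m_0$, and $(\cdot\triangleleft\mathfrak{h})^{-1}(B)=\{m\in M: m\triangleleft\mathfrak{h}\in B\}$. *)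

theory Defs
  imports "HOL-Algebra.Group_Action"
begin

definition cell_space ::
  "('a, 'c) monoid_scheme \<Rightarrow> 'b set \<Rightarrow> ('a \<Rightarrow> 'b \<Rightarrow> 'b) \<Rightarrow> 'b \<Rightarrow> ('b \<Rightarrow> 'a) \<Rightarrow> bool" where
  "cell_space G M \<phi> m0 gfam \<longleftrightarrow>
     transitive_action G M \<phi> \<and> M \<noteq> {} \<and> m0 \<in> M \<and>
     (\<forall>m\<in>M. gfam m \<in> carrier G \<and> \<phi> (gfam m) m0 = m)"

definition left_cosets :: "('a, 'c) monoid_scheme \<Rightarrow> 'a set \<Rightarrow> 'a set set" where
  "left_cosets G H = {a <#\<^bsub>G\<^esub> H | a. a \<in> carrier G}"

text \<open>The right semi-action m \<triangleleft> gG0 = gfam m * g acting on m0 (for a coset h,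
  any representative is chosen).\<close>
definition semi_act ::
  "('a, 'c) monoid_scheme \<Rightarrow> ('a \<Rightarrow> 'b \<Rightarrow> 'b) \<Rightarrow> 'b \<Rightarrow> ('b \<Rightarrow> 'a) \<Rightarrow> 'b \<Rightarrow> 'a set \<Rightarrow> 'b" where
  "semi_act G \<phi> m0 gfam m h = \<phi> (gfam m \<otimes>\<^bsub>G\<^esub> (SOME g. g \<in> h)) m0"

definition semi_preimage ::
  "('a, 'c) monoid_scheme \<Rightarrow> 'b set \<Rightarrow> ('a \<Rightarrow> 'b \<Rightarrow> 'b) \<Rightarrow> 'b \<Rightarrow> ('b \<Rightarrow> 'a) \<Rightarrow> 'a set \<Rightarrow> 'b set \<Rightarrow> 'b set" where
  "semi_preimage G M \<phi> m0 gfam h B = {m \<in> M. semi_act G \<phi> m0 gfam m h \<in> B}"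

end

theory Submission
  imports Defs
begin

lemma ga_grp: "group_action G E \<phi> \<Longrightarrow> group G"
  using group_action.group_hom group_hom.axioms(1) by blast

lemma stab_act:
  fixes G (structure)
  assumes ga: "group_action G E \<phi>" and m0: "m0 \<in> E"
    and h: "h \<in> stabilizer G \<phi> m0" and s: "s \<in> carrier G" and k: "k \<in> carrier G"
  shows "\<phi> (k \<otimes> (s \<otimes> h)) m0 = \<phi> (k \<otimes> s) m0"
proof -
  interpret group G using ga_grp[OF ga] .
  have hc: "h \<in> carrier G" "\<phi> h m0 = m0" using h unfolding stabilizer_def by auto
  have "\<phi> (k \<otimes> (s \<otimes> h)) m0 = \<phi> ((k \<otimes> s) \<otimes> h) m0" using s k hc by (simp add: m_assoc)
  also have "\<dots> = \<phi> (k \<otimes> s) m0"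
    using group_action.composition_rule[OF ga m0] hc s k by simp
  finally show ?thesis .
qed

lemma coset_same:
  fixes G (structure)
  assumes ga: "group_action G E \<phi>" and m0: "m0 \<in> E"
    and H: "H \<in> left_cosets G (stabilizer G \<phi> m0)"
    and x: "x \<in> H" and y: "y \<in> H" and k: "k \<in> carrier G"
  shows "\<phi> (k \<otimes> x) m0 = \<phi> (k \<otimes> y) m0"
proof -
  obtain s where s: "s \<in> carrier G" "H = s <# stabilizer G \<phi> m0"
    using H unfolding left_cosets_def by blast
  obtain h where h: "h \<in> stabilizer G \<phi> m0" "x = s \<otimes> h"
    using x s unfolding l_coset_def by blast
  obtain h' where h': "h' \<in> stabilizer G \<phi> m0" "y = s \<otimes> h'"
    using y s unfolding l_coset_def by blast
  show ?thesis using stab_act[OF ga m0 h(1) s(1) k] stab_act[OF ga m0 h'(1) s(1) k] h h' by simp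
qed

lemma coset_carrier:
  fixes G (structure)
  assumes ga: "group_action G E \<phi>"
    and H: "H \<in> left_cosets G (stabilizer G \<phi> m0)" and x: "x \<in> H"
  shows "x \<in> carrier G"
proof -
  interpret group G using ga_grp[OF ga] .
  obtain s where s: "s \<in> carrier G" "H = s <# stabilizer G \<phi> m0"
    using H unfolding left_cosets_def by blast
  then show ?thesis using x group_action.stabilizer_subset[OF ga]
    unfolding l_coset_def by auto
qed

lemma coset_ne:
  fixes G (structure)
  assumes ga: "group_action G E \<phi>" and m0: "m0 \<in> E"
    and H: "H \<in> left_cosets G (stabilizer G \<phi> m0)"
  shows "\<exists>x. x \<in> H"
proof -
  interpret group G using ga_grp[OF ga] .
  obtain s where s: "s \<in> carrier G" "H = s <# stabilizer G \<phi> m0"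
    using H unfolding left_cosets_def by blast
  have "s \<otimes> \<one> \<in> H" using s group_action.stabilizer_one_closed[OF ga m0]
    unfolding l_coset_def by (auto intro!: bexI[where x="\<one>"])
  thus ?thesis by blast
qed

lemma key:
  fixes G (structure)
  assumes ga: "group_action G M \<phi>" and m0: "m0 \<in> M"
    and gf: "\<forall>m\<in>M. gfam m \<in> carrier G \<and> \<phi> (gfam m) m0 = m"
    and m: "m \<in> M"
    and g: "\<g> \<in> left_cosets G (stabilizer G \<phi> m0)"
    and H: "\<h> \<in> left_cosets G (stabilizer G \<phi> m0)"
  shows "semi_act G \<phi> m0 gfam m \<g> \<in> M \<and> (\<exists>g\<in>\<g>. semi_act G \<phi> m0 gfam (semi_act G \<phi> m0 gfam m \<g>) (inv g <# \<h>)
     = semi_act G \<phi> m0 gfam m \<h>)"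
proof -
  interpret group G using ga_grp[OF ga] .
  define s where "s = (SOME g. g \<in> \<g>)"
  have s\<g>: "s \<in> \<g>" unfolding s_def using coset_ne[OF ga m0 g] by (metis someI_ex)
  have sc: "s \<in> carrier G" using coset_carrier[OF ga g s\<g>] .
  define gm where "gm = gfam m"
  have gmc: "gm \<in> carrier G" "\<phi> gm m0 = m" using gf m gm_def by auto
  define a where "a = semi_act G \<phi> m0 gfam m \<g>"
  have a_eq: "a = \<phi> (gm \<otimes> s) m0" unfolding a_def semi_act_def s_def gm_def by simp
  have aM: "a \<in> M" using group_action.element_image[OF ga _ m0] a_eq gmc sc by blast
  define gaa where "gaa = gfam a"
  have gac: "gaa \<in> carrier G" "\<phi> gaa m0 = a" using gf aM gaa_def by auto
  define g0 where "g0 = inv gm \<otimes> gaa"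
  have g0c: "g0 \<in> carrier G" using g0_def gmc gac by simp
  define h where "h = inv s \<otimes> g0"
  have hc: "h \<in> carrier G" using h_def g0c sc by simp
  have "\<phi> h m0 = \<phi> ((inv s \<otimes> inv gm) \<otimes> gaa) m0"
    unfolding h_def g0_def using sc gmc gac by (simp add: m_assoc)
  also have "\<dots> = \<phi> (inv s \<otimes> inv gm) (\<phi> gaa m0)"
    by (rule group_action.composition_rule[OF ga m0]) (use sc gmc gac in auto)
  also have "\<dots> = \<phi> (inv s \<otimes> inv gm) (\<phi> (gm \<otimes> s) m0)" using gac a_eq by simp
  also have "\<dots> = \<phi> ((inv s \<otimes> inv gm) \<otimes> (gm \<otimes> s)) m0"
    using group_action.composition_rule[OF ga m0] sc gmc by simp
  also have "(inv s \<otimes> inv gm) \<otimes> (gm \<otimes> s) = \<one>"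
    using sc gmc by (simp add: m_assoc[symmetric]) (simp add: m_assoc)
  also have "\<phi> \<one> m0 = m0" using group_action.stabilizer_one_closed[OF ga m0]
    unfolding stabilizer_def by simp
  finally have hs: "h \<in> stabilizer G \<phi> m0" using hc unfolding stabilizer_def by simp
  have g0eq: "g0 = s \<otimes> h" unfolding h_def using sc g0c by (simp add: m_assoc[symmetric])
  obtain t where t: "t \<in> carrier G" "\<g> = t <# stabilizer G \<phi> m0"
    using g unfolding left_cosets_def by blast
  obtain h1 where h1: "h1 \<in> stabilizer G \<phi> m0" "s = t \<otimes> h1"
    using s\<g> t unfolding l_coset_def by blast
  have h1c: "h1 \<in> carrier G" using h1 group_action.stabilizer_subset[OF ga] by auto
  have "h1 \<otimes> h \<in> stabilizer G \<phi> m0"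
    using group_action.stabilizer_m_closed[OF ga m0 h1(1) hs] .
  moreover have "g0 = t \<otimes> (h1 \<otimes> h)" using g0eq h1 t h1c hc by (simp add: m_assoc)
  ultimately have g0in: "g0 \<in> \<g>" using t unfolding l_coset_def by blast
  obtain y0 where y0: "y0 \<in> \<h>" using coset_ne[OF ga m0 H] by blast
  have "inv g0 \<otimes> y0 \<in> inv g0 <# \<h>" using y0 unfolding l_coset_def by blast
  hence zin: "(SOME z. z \<in> inv g0 <# \<h>) \<in> inv g0 <# \<h>" by (metis someI_ex)
  then obtain y where y: "y \<in> \<h>" "(SOME z. z \<in> inv g0 <# \<h>) = inv g0 \<otimes> y"
    unfolding l_coset_def by blast
  have yc: "y \<in> carrier G" using coset_carrier[OF ga H y(1)] .
  have "semi_act G \<phi> m0 gfam a (inv g0 <# \<h>) = \<phi> (gaa \<otimes> (inv g0 \<otimes> y)) m0"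
    unfolding semi_act_def gaa_def using y by simp
  also have "gaa \<otimes> (inv g0 \<otimes> y) = gm \<otimes> y"
    unfolding g0_def using gmc gac yc
    by (simp add: inv_mult_group m_assoc[symmetric])
  also have "\<phi> (gm \<otimes> y) m0 = \<phi> (gm \<otimes> (SOME z. z \<in> \<h>)) m0"
    using coset_same[OF ga m0 H y(1) _ gmc(1)] y0 by (metis someI_ex)
  also have "\<dots> = semi_act G \<phi> m0 gfam m \<h>" unfolding semi_act_def gm_def ..
  finally show ?thesis using aM g0in unfolding a_def by blast
qed

theorem lemma5:
  fixes G (structure) and M :: "'b set" and \<phi> and m0 :: 'b and gfam
  assumes "cell_space G M \<phi> m0 gfam"
    and "A \<subseteq> M" and "A' \<subseteq> M"
    and "\<g> \<in> left_cosets G (stabilizer G \<phi> m0)"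
    and "\<g>' \<in> left_cosets G (stabilizer G \<phi> m0)"
    and "m \<in> semi_preimage G M \<phi> m0 gfam \<g> A - semi_preimage G M \<phi> m0 gfam \<g>' A'"
  shows "semi_act G \<phi> m0 gfam m \<g> \<in>
           (\<Union>g\<in>\<g>. A - semi_preimage G M \<phi> m0 gfam (inv g <# \<g>') A') \<and>
         semi_act G \<phi> m0 gfam m \<g>' \<in>
           (\<Union>g'\<in>\<g>'. semi_preimage G M \<phi> m0 gfam (inv g' <# \<g>) A - A')"
proof -
  have ga: "group_action G M \<phi>" and m0: "m0 \<in> M"
    and gf: "\<forall>m\<in>M. gfam m \<in> carrier G \<and> \<phi> (gfam m) m0 = m"
  proof -
    have "transitive_action G M \<phi>" "m0 \<in> M" "\<forall>m\<in>M. gfam m \<in> carrier G \<and> \<phi> (gfam m) m0 = m"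
      using assms(1) unfolding cell_space_def by simp_all
    thus "group_action G M \<phi>" "m0 \<in> M" "\<forall>m\<in>M. gfam m \<in> carrier G \<and> \<phi> (gfam m) m0 = m"
      using transitive_action.axioms(1) by auto
  qed
  have mM: "m \<in> M" and inA: "semi_act G \<phi> m0 gfam m \<g> \<in> A"
    and notA': "semi_act G \<phi> m0 gfam m \<g>' \<notin> A'"
    using assms(6) unfolding semi_preimage_def by simp_all
  obtain g where g: "g \<in> \<g>" "semi_act G \<phi> m0 gfam (semi_act G \<phi> m0 gfam m \<g>) (inv g <# \<g>')
     = semi_act G \<phi> m0 gfam m \<g>'"
    using key[OF ga m0 gf mM assms(4) assms(5)] by blast
  obtain g' where g': "g' \<in> \<g>'" "semi_act G \<phi> m0 gfam (semi_act G \<phi> m0 gfam m \<g>') (inv g' <# \<g>)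
     = semi_act G \<phi> m0 gfam m \<g>"
    and bM: "semi_act G \<phi> m0 gfam m \<g>' \<in> M"
    using key[OF ga m0 gf mM assms(5) assms(4)] by blast
  show ?thesis
  proof
    show "semi_act G \<phi> m0 gfam m \<g> \<in>
           (\<Union>g\<in>\<g>. A - semi_preimage G M \<phi> m0 gfam (inv g <# \<g>') A')"
    proof (rule UN_I[OF g(1)])
      show "semi_act G \<phi> m0 gfam m \<g> \<in> A - semi_preimage G M \<phi> m0 gfam (inv g <# \<g>') A'"
        using g(2) inA notA' by (simp add: semi_preimage_def)
    qed
    show "semi_act G \<phi> m0 gfam m \<g>' \<in>
           (\<Union>g'\<in>\<g>'. semi_preimage G M \<phi> m0 gfam (inv g' <# \<g>) A - A')"
    proof (rule UN_I[OF g'(1)])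
      show "semi_act G \<phi> m0 gfam m \<g>' \<in> semi_preimage G M \<phi> m0 gfam (inv g' <# \<g>) A - A'"
        using g'(2) inA notA' bM by (simp add: semi_preimage_def)
    qed
  qed
qed

end
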